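(* Let $E$ be an elliptic curve over $\mathbb{Q}$ and $K$ a quadratic field with $\mathrm{Gal}(K/\mathbb{Q})=\langle\tau\rangle$. Let $P\in E(K)\setminus E(\mathbb{Q})$ be such that $mP\in E(\mathbb{Q})$ for some non-zero integer $m$. If $\psi(P)=\tau(P)$ for some $\psi\in\mathrm{Aut}(E/\overline{\mathbb{Q}})$, then $P$ has finite order. *)

theory Defs
  imports Complex_Main "HOL-Computational_Algebra.Polynomial" "HOL-Computational_Algebra.Squarefree"
begin

text \<open>Projective points of a short Weierstrass curve, with coordinates in the complex
numbers (which contain the algebraic closure of Q).\<close>
datatype pt = Infty | Pt complex complex

definition elliptic_Q :: "complex \<Rightarrow> complex \<Rightarrow> bool" where
  "elliptic_Q a b \<longleftrightarrow> a \<in> \<rat> \<and> b \<in> \<rat> \<and> 4 * a ^ 3 + 27 * b ^ 2 \<noteq> 0"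

fun on_curve :: "complex \<Rightarrow> complex \<Rightarrow> pt \<Rightarrow> bool" where
  "on_curve a b Infty = True"
| "on_curve a b (Pt x y) = (y ^ 2 = x ^ 3 + a * x + b)"

fun ec_add :: "complex \<Rightarrow> pt \<Rightarrow> pt \<Rightarrow> pt" where
  "ec_add a Infty Q = Q"
| "ec_add a P Infty = P"
| "ec_add a (Pt x1 y1) (Pt x2 y2) =
     (if x1 = x2 \<and> y1 = - y2 then Infty
      else let l = (if x1 = x2 then (3 * x1 ^ 2 + a) / (2 * y1) else (y2 - y1) / (x2 - x1));
               x3 = l ^ 2 - x1 - x2
           in Pt x3 (l * (x1 - x3) - y1))"

fun ec_neg :: "pt \<Rightarrow> pt" where
  "ec_neg Infty = Infty"
| "ec_neg (Pt x y) = Pt x (- y)"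

fun ec_nmul :: "complex \<Rightarrow> nat \<Rightarrow> pt \<Rightarrow> pt" where
  "ec_nmul a 0 P = Infty"
| "ec_nmul a (Suc n) P = ec_add a P (ec_nmul a n P)"

definition ec_mul :: "complex \<Rightarrow> int \<Rightarrow> pt \<Rightarrow> pt" where
  "ec_mul a m P = (if m \<ge> 0 then ec_nmul a (nat m) P else ec_neg (ec_nmul a (nat (- m)) P))"

definition finite_order :: "complex \<Rightarrow> pt \<Rightarrow> bool" where
  "finite_order a P \<longleftrightarrow> (\<exists>n::nat. n > 0 \<and> ec_nmul a n P = Infty)"

fun pt_in :: "complex set \<Rightarrow> pt \<Rightarrow> bool" where
  "pt_in F Infty = True"
| "pt_in F (Pt x y) = (x \<in> F \<and> y \<in> F)"

definition quad_field :: "int \<Rightarrow> complex set" where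
  "quad_field d = {of_real r + of_real s * csqrt (of_int d) | r s. r \<in> \<rat> \<and> s \<in> \<rat>}"

definition quad_conj :: "int \<Rightarrow> complex \<Rightarrow> complex" where
  "quad_conj d z = (THE w. \<exists>r s. r \<in> \<rat> \<and> s \<in> \<rat> \<and>
      z = of_real r + of_real s * csqrt (of_int d) \<and> w = of_real r - of_real s * csqrt (of_int d))"

fun pt_map :: "(complex \<Rightarrow> complex) \<Rightarrow> pt \<Rightarrow> pt" where
  "pt_map f Infty = Infty"
| "pt_map f (Pt x y) = Pt (f x) (f y)"

text \<open>Automorphisms of E over Qbar: admissible changes of Weierstrass coordinates
  (x,y) \<mapsto> (u^2 x + r, u^3 y + s u^2 x + t), u \<noteq> 0, u r s t algebraic, fixing O,
  that map the curve E to itself.\<close>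
definition wsub :: "complex \<Rightarrow> complex \<Rightarrow> complex \<Rightarrow> complex \<Rightarrow> pt \<Rightarrow> pt" where
  "wsub u r s t P = (case P of Infty \<Rightarrow> Infty
      | Pt x y \<Rightarrow> Pt (u ^ 2 * x + r) (u ^ 3 * y + s * u ^ 2 * x + t))"

definition ec_aut :: "complex \<Rightarrow> complex \<Rightarrow> (pt \<Rightarrow> pt) \<Rightarrow> bool" where
  "ec_aut a b \<psi> \<longleftrightarrow> (\<exists>u r s t. u \<noteq> 0 \<and> algebraic u \<and> algebraic r \<and> algebraic s \<and> algebraic t \<and>
      \<psi> = wsub u r s t \<and>
      (\<forall>P. on_curve a b P \<longrightarrow> on_curve a b (wsub u r s t P)))"

end

theory Submission
  imports Defs
begin

lemma add_Pt_chord: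
  "x1 \<noteq> x2 \<Longrightarrow> l = (y2-y1)/(x2-x1) \<Longrightarrow> ec_add a (Pt x1 y1) (Pt x2 y2) =
     Pt (l^2 - x1 - x2) (l * (x1 - (l^2 - x1 - x2)) - y1)"
  by (simp add: Let_def)

lemma add_Pt_tangent:
  "y1 \<noteq> 0 \<Longrightarrow> l = (3*x1^2+a)/(2*y1) \<Longrightarrow> ec_add a (Pt x1 y1) (Pt x1 y1) =
     Pt (l^2 - x1 - x1) (l * (x1 - (l^2 - x1 - x1)) - y1)"
  by (simp add: Let_def)

lemma sum_line:
  fixes x1 x2 x3 y1 y2 y3 l v a b :: complex
  assumes c1: "y1^2 = x1^3 + a*x1 + b" and c2: "y2^2 = x2^3 + a*x2 + b"
    and l1: "y1 = l*x1 + v" and l2: "y2 = l*x2 + v" and l3: "y3 = l*x3 + v"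
    and e1: "l^2 = x1+x2+x3" and e2: "a - 2*l*v = x1*x2 + x1*x3 + x2*x3"
    and nn: "\<not>(x1 = x2 \<and> y1 = -y2)"
  shows "ec_add a (Pt x1 y1) (Pt x2 y2) = Pt x3 (-y3)"
proof (cases "x1 = x2")
  case True
  have "y1^2 = y2^2" using c1 c2 True by simp
  then have "y1 = y2 \<or> y1 = -y2" by (metis power2_eq_iff)
  with nn True have y12: "y1 = y2" by auto
  have y1nz: "y1 \<noteq> 0" using nn True y12 by auto
  have x3: "x3 = l^2 - x1 - x1" using e1 True by simp
  have "a - 2*l*v = x1*x1 + 2*x1*x3" using e2 True by (simp add: algebra_simps)
  then have "2*l*y1 = 3*x1^2 + a"
    unfolding l1 x3 by (simp add: algebra_simps power2_eq_square)
  then have ll: "l = (3*x1^2+a)/(2*y1)" using y1nz by (simp add: field_simps)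
  have "ec_add a (Pt x1 y1) (Pt x2 y2) = Pt (l^2 - x1 - x1) (l * (x1 - (l^2 - x1 - x1)) - y1)"
    using add_Pt_tangent[OF y1nz ll] True y12 by simp
  also have "\<dots> = Pt x3 (l * (x1 - x3) - y1)" using x3 by simp
  also have "\<dots> = Pt x3 (-y3)" using l1 l3 by (simp add: algebra_simps)
  finally show ?thesis .
next
  case False
  have "y2 - y1 = l * (x2 - x1)" using l1 l2 by (simp add: algebra_simps)
  then have ll: "l = (y2-y1)/(x2-x1)" using False by simp
  have x3: "x3 = l^2 - x1 - x2" using e1 by simp
  have "ec_add a (Pt x1 y1) (Pt x2 y2) = Pt (l^2 - x1 - x2) (l * (x1 - (l^2 - x1 - x2)) - y1)"
    using add_Pt_chord[OF False ll] by simp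
  also have "\<dots> = Pt x3 (l * (x1 - x3) - y1)" using x3 by simp
  also have "\<dots> = Pt x3 (-y3)" using l1 l3 by (simp add: algebra_simps)
  finally show ?thesis .
qed

lemma line_e3:
  fixes x1 x2 x3 y1 l v a b :: complex
  assumes "y1 = l*x1+v" "y1^2 = x1^3+a*x1+b" "l^2 = x1+x2+x3" "a - 2*l*v = x1*x2+x1*x3+x2*x3"
  shows "v^2 - b = x1*x2*x3"
  using assms by algebra

lemma line_curve3:
  fixes x1 x2 x3 y1 l v a b :: complex
  assumes "y1 = l*x1+v" "y1^2 = x1^3+a*x1+b" "l^2 = x1+x2+x3" "a - 2*l*v = x1*x2+x1*x3+x2*x3"
  shows "(l*x3+v)^2 = x3^3 + a*x3 + b"
  using assms by algebra

lemma chord_e2: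
  fixes x1 x2 x3 y1 y2 l v a b :: complex
  assumes "y1 = l*x1+v" "y2 = l*x2+v" "y1^2 = x1^3+a*x1+b" "y2^2 = x2^3+a*x2+b"
    "x1 \<noteq> x2" "x3 = l^2 - x1 - x2"
  shows "a - 2*l*v = x1*x2+x1*x3+x2*x3"
proof -
  have "(x1 - x2) * (x1^2 + x1*x2 + x2^2 + a - l^2*(x1+x2) - 2*l*v) = 0"
    using assms(1-4) by algebra
  then have "x1^2 + x1*x2 + x2^2 + a - l^2*(x1+x2) - 2*l*v = 0" using assms(5) by simp
  then show ?thesis using assms(6) by algebra
qed

lemma tangent_e2:
  fixes x1 x3 y1 l v a b :: complex
  assumes "y1 = l*x1+v" "2*l*y1 = 3*x1^2+a" "x3 = l^2 - x1 - x1"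
  shows "a - 2*l*v = x1*x1+x1*x3+x1*x3"
  using assms by algebra

lemma add_line:
  fixes x1 x2 y1 y2 a b :: complex
  assumes c1: "y1^2 = x1^3+a*x1+b" and c2: "y2^2 = x2^3+a*x2+b"
    and nn: "\<not>(x1 = x2 \<and> y1 = -y2)"
  obtains l v x3 y3 where "ec_add a (Pt x1 y1) (Pt x2 y2) = Pt x3 y3"
    "y1 = l*x1+v" "y2 = l*x2+v" "-y3 = l*x3+v" "l^2 = x1+x2+x3"
    "a - 2*l*v = x1*x2+x1*x3+x2*x3" "v^2 - b = x1*x2*x3" "y3^2 = x3^3+a*x3+b"
proof (cases "x1 = x2")
  case True
  have "y1^2 = y2^2" using c1 c2 True by simp
  then have "y1 = y2 \<or> y1 = -y2" by (metis power2_eq_iff)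
  with nn True have y12: "y1 = y2" by auto
  have y1nz: "y1 \<noteq> 0" using nn True y12 by auto
  define l where "l = (3*x1^2+a)/(2*y1)"
  define v where "v = y1 - l*x1"
  define x3 where "x3 = l^2 - x1 - x1"
  define y3 where "y3 = l * (x1 - x3) - y1"
  have h1: "ec_add a (Pt x1 y1) (Pt x2 y2) = Pt x3 y3"
    using add_Pt_tangent[OF y1nz l_def] True y12 x3_def y3_def by simp
  have h2a: "y1 = l*x1+v" "y2 = l*x2+v" "-y3 = l*x3+v"
    using v_def y3_def True y12 by (simp, simp, algebra)
  have h2b: "l^2 = x1+x2+x3" using x3_def True by simp
  note h2 = h2a h2b
  have lt: "2*l*y1 = 3*x1^2+a" using y1nz l_def by (simp add: field_simps)
  have h3: "a - 2*l*v = x1*x2+x1*x3+x2*x3"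
    using tangent_e2[OF h2(1) lt x3_def] True by (simp add: algebra_simps)
  have h4: "v^2 - b = x1*x2*x3" using line_e3[OF h2(1) c1 h2(4) h3] .
  have h5: "y3^2 = x3^3+a*x3+b" using line_curve3[OF h2(1) c1 h2(4) h3] h2(3)
    by (metis minus_diff_eq power2_minus uminus_add_conv_diff)
  show ?thesis using that h1 h2 h3 h4 h5 by blast
next
  case False
  define l where "l = (y2-y1)/(x2-x1)"
  define v where "v = y1 - l*x1"
  define x3 where "x3 = l^2 - x1 - x2"
  define y3 where "y3 = l * (x1 - x3) - y1"
  have h1: "ec_add a (Pt x1 y1) (Pt x2 y2) = Pt x3 y3"
    using add_Pt_chord[OF False l_def] x3_def y3_def by simp
  have "l * (x2 - x1) = y2 - y1" using False l_def by simp
  then have h2a: "y1 = l*x1+v" "y2 = l*x2+v" "-y3 = l*x3+v"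
    using v_def y3_def by (simp, algebra, algebra)
  have h2b: "l^2 = x1+x2+x3" using x3_def by simp
  note h2 = h2a h2b
  have h3: "a - 2*l*v = x1*x2+x1*x3+x2*x3"
    using chord_e2[OF h2(1) h2(2) c1 c2 False x3_def] .
  have h4: "v^2 - b = x1*x2*x3" using line_e3[OF h2(1) c1 h2(4) h3] .
  have h5: "y3^2 = x3^3+a*x3+b" using line_curve3[OF h2(1) c1 h2(4) h3] h2(3)
    by (metis power2_minus)
  show ?thesis using that h1 h2 h3 h4 h5 by blast
qed

lemma add_Infty_right[simp]: "ec_add a P Infty = P"
  by (cases P) auto

lemma add_neg_self: "ec_add a P (ec_neg P) = Infty"
  by (cases P) auto

lemma neg_neg[simp]: "ec_neg (ec_neg P) = P"
  by (cases P) auto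

lemma on_curve_neg[simp]: "on_curve a b (ec_neg P) = on_curve a b P"
  by (cases P) auto

lemma add_Pt_Infty_iff:
  "ec_add a (Pt x1 y1) (Pt x2 y2) = Infty \<longleftrightarrow> (x1 = x2 \<and> y1 = -y2)"
  by (auto simp: Let_def)

lemma on_curve_add:
  assumes "on_curve a b P" "on_curve a b Q"
  shows "on_curve a b (ec_add a P Q)"
proof (cases P; cases Q)
  fix x1 y1 x2 y2 assume P: "P = Pt x1 y1" and Q: "Q = Pt x2 y2"
  show ?thesis
  proof (cases "x1 = x2 \<and> y1 = -y2")
    case True then show ?thesis using P Q by auto
  next
    case False
    have c1: "y1^2 = x1^3+a*x1+b" and c2: "y2^2 = x2^3+a*x2+b" using assms P Q by auto
    obtain l v x3 y3 where "ec_add a (Pt x1 y1) (Pt x2 y2) = Pt x3 y3" "y3^2 = x3^3+a*x3+b"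
      using add_line[OF c1 c2 False] by metis
    then show ?thesis using P Q by simp
  qed
qed (use assms in auto)

lemma add_comm:
  assumes "on_curve a b P" "on_curve a b Q"
  shows "ec_add a P Q = ec_add a Q P"
proof (cases P; cases Q)
  fix x1 y1 x2 y2 assume P: "P = Pt x1 y1" and Q: "Q = Pt x2 y2"
  show ?thesis
  proof (cases "x1 = x2 \<and> y1 = -y2")
    case True then show ?thesis using P Q by auto
  next
    case False
    have c1: "y1^2 = x1^3+a*x1+b" and c2: "y2^2 = x2^3+a*x2+b" using assms P Q by auto
    obtain l v x3 y3 where h: "ec_add a (Pt x1 y1) (Pt x2 y2) = Pt x3 y3"
      "y1 = l*x1+v" "y2 = l*x2+v" "-y3 = l*x3+v" "l^2 = x1+x2+x3"
      "a - 2*l*v = x1*x2+x1*x3+x2*x3"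
      using add_line[OF c1 c2 False] by metis
    have "ec_add a (Pt x2 y2) (Pt x1 y1) = Pt x3 (- (-y3))"
    proof (rule sum_line[OF c2 c1 h(3) h(2)])
      show "- y3 = l * x3 + v" using h(4) .
      show "l\<^sup>2 = x2 + x1 + x3" using h(5) by (simp add: algebra_simps)
      show "a - 2 * l * v = x2 * x1 + x2 * x3 + x1 * x3" using h(6) by (simp add: algebra_simps)
      show "\<not> (x2 = x1 \<and> y2 = - y1)" using False by auto
    qed
    then show ?thesis using h(1) P Q by simp
  qed
qed auto

lemma neg_add:
  assumes "on_curve a b P" "on_curve a b Q"
  shows "ec_neg (ec_add a P Q) = ec_add a (ec_neg P) (ec_neg Q)"
proof (cases P; cases Q)
  fix x1 y1 x2 y2 assume P: "P = Pt x1 y1" and Q: "Q = Pt x2 y2"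
  show ?thesis
  proof (cases "x1 = x2 \<and> y1 = -y2")
    case True then show ?thesis using P Q by auto
  next
    case False
    have c1: "y1^2 = x1^3+a*x1+b" and c2: "y2^2 = x2^3+a*x2+b" using assms P Q by auto
    obtain l v x3 y3 where h: "ec_add a (Pt x1 y1) (Pt x2 y2) = Pt x3 y3"
      "y1 = l*x1+v" "y2 = l*x2+v" "-y3 = l*x3+v" "l^2 = x1+x2+x3"
      "a - 2*l*v = x1*x2+x1*x3+x2*x3"
      using add_line[OF c1 c2 False] by metis
    have c1': "(-y1)^2 = x1^3+a*x1+b" and c2': "(-y2)^2 = x2^3+a*x2+b" using c1 c2 by simp_all
    have "ec_add a (Pt x1 (-y1)) (Pt x2 (-y2)) = Pt x3 (-y3)"
    proof (rule sum_line[OF c1' c2', where l="-l" and v="-v"])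
      show "- y1 = - l * x1 + - v" using h(2) by simp
      show "- y2 = - l * x2 + - v" using h(3) by simp
      show "y3 = - l * x3 + - v" using h(4) by algebra
      show "(- l)\<^sup>2 = x1 + x2 + x3" using h(5) by simp
      show "a - 2 * - l * - v = x1 * x2 + x1 * x3 + x2 * x3" using h(6) by simp
      show "\<not> (x1 = x2 \<and> - y1 = - (- y2))" using False by auto
    qed
    then show ?thesis using h(1) P Q by simp
  qed
qed auto

lemma disc_contra:
  fixes a b x :: complex
  assumes "x^3 + a*x + b = 0" "3*x^2 + a = 0" "4*a^3+27*b^2 \<noteq> 0"
  shows False
proof -
  have "a = -3*x^2" using assms(2) by algebra
  moreover have "b = 2*x^3" using assms(1,2) by algebra
  ultimately have "4*a^3+27*b^2 = 0" by algebra
  with assms(3) show False by simp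
qed

lemma add_cancel:
  assumes "on_curve a b P" "on_curve a b Q" and disc: "4*a^3+27*b^2 \<noteq> 0"
  shows "ec_add a (ec_add a P Q) (ec_neg Q) = P"
proof (cases P; cases Q)
  fix x1 y1 x2 y2 assume P: "P = Pt x1 y1" and Q: "Q = Pt x2 y2"
  show ?thesis
  proof (cases "x1 = x2 \<and> y1 = -y2")
    case True then show ?thesis using P Q by auto
  next
    case False
    have c1: "y1^2 = x1^3+a*x1+b" and c2: "y2^2 = x2^3+a*x2+b" using assms P Q by auto
    obtain l v x3 y3 where h: "ec_add a (Pt x1 y1) (Pt x2 y2) = Pt x3 y3"
      "y1 = l*x1+v" "y2 = l*x2+v" "-y3 = l*x3+v" "l^2 = x1+x2+x3"
      "a - 2*l*v = x1*x2+x1*x3+x2*x3" "v^2 - b = x1*x2*x3" "y3^2 = x3^3+a*x3+b"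
      using add_line[OF c1 c2 False] by metis
    have c2': "(-y2)^2 = x2^3+a*x2+b" using c2 by simp
    have nn: "\<not> (x3 = x2 \<and> y3 = - (-y2))"
    proof
      assume e: "x3 = x2 \<and> y3 = - (-y2)"
      have y20: "y2 = 0" using h(3,4) e by algebra
      have v: "v = - l * x2" using h(3) y20 by algebra
      have f0: "x2^3 + a*x2 + b = 0" using c2 y20 by simp
      have "3*x2^2 + a = 0" using h(5,6) e v by algebra
      then show False using disc_contra[OF f0 _ disc] by simp
    qed
    have "ec_add a (Pt x3 y3) (Pt x2 (-y2)) = Pt x1 (- (-y1))"
    proof (rule sum_line[OF h(8) c2', where l="-l" and v="-v"])
      show "y3 = - l * x3 + - v" using h(4) by algebra
      show "- y2 = - l * x2 + - v" using h(3) by simp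
      show "- y1 = - l * x1 + - v" using h(2) by simp
      show "(- l)\<^sup>2 = x3 + x2 + x1" using h(5) by simp
      show "a - 2 * - l * - v = x3 * x2 + x3 * x1 + x2 * x1" using h(6) by (simp add: algebra_simps)
      show "\<not> (x3 = x2 \<and> y3 = - (- y2))" using nn by auto
    qed
    then show ?thesis using h(1) P Q by simp
  qed
qed (auto simp: add_neg_self)

lemma H_lemma:
  fixes x1 x2 x3 xD yD y3 l v al a b :: complex
  assumes cD: "yD^2 = xD^3 + a*xD + b" and cC: "y3^2 = x3^3+a*x3+b"
    and e1: "l^2 = x1+x2+xD" and e2: "a - 2*l*v = x1*x2 + x1*xD + x2*xD"
    and lD: "-yD = l*xD + v" and anz: "al \<noteq> 0"
    and q3: "y3 = l*x3 + v + al*(x3-x1)*(x3-x2)"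
    and K3: "-(x3 - xD) + 2*al*(l*x3+v) + al^2*(x3-x1)*(x3-x2) = 0"
    and nn: "\<not>(xD = x3 \<and> yD = -y3)"
    and x4: "x4 = (1 - 2*al*l)/al^2 + x1 + x2 - x3"
    and y4: "y4 = l*x4 + v + al*(x4-x1)*(x4-x2)"
  shows "ec_add a (Pt xD yD) (Pt x3 y3) = Pt x4 (-y4)"
proof -
  define ia where "ia = 1/al"
  have ia: "al * ia = 1" using anz ia_def by simp
  have x4': "al^2 * x4 = 1 - 2*al*l + al^2*(x1 + x2 - x3)" using x4 anz
    by (simp add: field_simps)
  have K4: "-(x4 - xD) + 2*al*(l*x4+v) + al^2*(x4-x1)*(x4-x2) = 0"
  proof -
    have "al^2 * (-(x4 - xD) + 2*al*(l*x4+v) + al^2*(x4-x1)*(x4-x2)) = 0"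
      using x4' K3 by algebra
    then show ?thesis using anz by simp
  qed
  show ?thesis
  proof (rule sum_line[OF cD cC, where l="ia - l" and v="-xD*ia - v"])
    show "yD = (ia - l) * xD + (- xD * ia - v)" using lD by algebra
    show "y3 = (ia - l) * x3 + (- xD * ia - v)" using q3 K3 ia by algebra
    show "y4 = (ia - l) * x4 + (- xD * ia - v)" using y4 K4 ia by algebra
    show "(ia - l)\<^sup>2 = xD + x3 + x4" using x4' ia e1 by algebra
    show "a - 2 * (ia - l) * (- xD * ia - v) = xD * x3 + xD * x4 + x3 * x4"
      using x4' ia e2 K3 by algebra
    show "\<not> (xD = x3 \<and> yD = - y3)" using nn .
  qed
qed

lemma H_pt:
  fixes x1 x2 x3 y1 y2 y3 a b :: complex
  assumes c1: "y1^2 = x1^3+a*x1+b" and c2: "y2^2 = x2^3+a*x2+b" and c3: "y3^2 = x3^3+a*x3+b"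
    and nAB: "\<not>(x1 = x2 \<and> y1 = -y2)" and x31: "x3 \<noteq> x1" and x32: "x3 \<noteq> x2"
    and nD: "ec_add a (Pt x1 y1) (Pt x2 y2) \<noteq> Pt x3 (-y3)"
  obtains l v where "y1 = l*x1+v" "y2 = l*x2+v" "(y3 - l*x3 - v)/((x3-x1)*(x3-x2)) \<noteq> 0"
    "a - 2*l*v = x1*x2 + x1*(l^2-x1-x2) + x2*(l^2-x1-x2)"
    "ec_add a (ec_add a (Pt x1 y1) (Pt x2 y2)) (Pt x3 y3) =
      (let al = (y3 - l*x3 - v)/((x3-x1)*(x3-x2));
           x4 = (1 - 2*al*l)/al^2 + x1 + x2 - x3
       in Pt x4 (-(l*x4 + v + al*(x4-x1)*(x4-x2))))"
proof -
  obtain l v xD yD where h: "ec_add a (Pt x1 y1) (Pt x2 y2) = Pt xD yD"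
    "y1 = l*x1+v" "y2 = l*x2+v" "-yD = l*xD+v" "l^2 = x1+x2+xD"
    "a - 2*l*v = x1*x2+x1*xD+x2*xD" "v^2 - b = x1*x2*xD" "yD^2 = xD^3+a*xD+b"
    using add_line[OF c1 c2 nAB] by metis
  have xD: "xD = l^2 - x1 - x2" using h(5) by simp
  have nn: "\<not>(xD = x3 \<and> yD = -y3)" using nD h(1) by auto
  define al where "al = (y3 - l*x3 - v)/((x3-x1)*(x3-x2))"
  have p3: "(x3-x1)*(x3-x2) \<noteq> 0" using x31 x32 by simp
  have alp: "al * ((x3-x1)*(x3-x2)) = y3 - (l*x3 + v)" using p3 unfolding al_def by (simp add: diff_add_eq_diff_diff_swap)
  have g3: "y3^2 - (l*x3+v)^2 = ((x3-x1)*(x3-x2)) * (x3 - xD)"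
    using c3 h(5,6,7) by algebra
  have anz: "al \<noteq> 0"
  proof
    assume "al = 0"
    then have y3: "y3 = l*x3+v" using alp by simp
    then have "((x3-x1)*(x3-x2)) * (x3 - xD) = 0" using g3 by simp
    then have x3D: "x3 = xD" using p3 by simp
    have "yD = -(l*xD+v)" using h(4) by (metis minus_minus)
    then have "yD = -y3" using y3 x3D by simp
    then show False using nn x3D by auto
  qed
  have "((x3-x1)*(x3-x2)) * (al*(y3 + (l*x3+v))) = ((x3-x1)*(x3-x2)) * (x3 - xD)"
    using alp g3 by algebra
  then have ay: "al*(y3 + (l*x3+v)) = x3 - xD" using p3 by simp
  have K3: "-(x3 - xD) + 2*al*(l*x3+v) + al^2*(x3-x1)*(x3-x2) = 0"
    using ay alp by algebra
  have q3: "y3 = l*x3 + v + al*(x3-x1)*(x3-x2)" using alp by algebra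
  define x4 where "x4 = (1 - 2*al*l)/al^2 + x1 + x2 - x3"
  define y4 where "y4 = l*x4 + v + al*(x4-x1)*(x4-x2)"
  have "ec_add a (Pt xD yD) (Pt x3 y3) = Pt x4 (-y4)"
    by (rule H_lemma[OF h(8) c3 h(5) h(6) h(4) anz q3 K3 nn x4_def y4_def])
  then have "ec_add a (ec_add a (Pt x1 y1) (Pt x2 y2)) (Pt x3 y3) =
      (let al = (y3 - l*x3 - v)/((x3-x1)*(x3-x2));
           x4 = (1 - 2*al*l)/al^2 + x1 + x2 - x3
       in Pt x4 (-(l*x4 + v + al*(x4-x1)*(x4-x2))))"
    using h(1) al_def x4_def y4_def by (simp add: Let_def)
  moreover have "a - 2*l*v = x1*x2 + x1*(l^2-x1-x2) + x2*(l^2-x1-x2)" using h(6) xD by simp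
  ultimately show ?thesis using that h(2,3) anz al_def by simp
qed

lemma quad_zero:
  fixes c2 c1 c0 x1 x2 x3 :: complex
  assumes "c2*x1^2 + c1*x1 + c0 = 0" "c2*x2^2 + c1*x2 + c0 = 0" "c2*x3^2 + c1*x3 + c0 = 0"
    "x1 \<noteq> x2" "x2 \<noteq> x3" "x1 \<noteq> x3"
  shows "c2 = 0 \<and> c1 = 0 \<and> c0 = 0"
proof -
  have "(x1 - x2) * (c2*(x1+x2) + c1) = 0" using assms(1,2) by algebra
  then have a: "c2*(x1+x2) + c1 = 0" using assms(4) by simp
  have "(x2 - x3) * (c2*(x2+x3) + c1) = 0" using assms(2,3) by algebra
  then have b: "c2*(x2+x3) + c1 = 0" using assms(5) by simp
  have "c2 * (x1 - x3) = 0" using a b by algebra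
  then have c2: "c2 = 0" using assms(6) by simp
  then have c1: "c1 = 0" using a by simp
  then show ?thesis using c2 assms(1) by simp
qed

lemma assoc_generic:
  fixes x1 x2 x3 y1 y2 y3 a b :: complex
  assumes c1: "y1^2 = x1^3+a*x1+b" and c2: "y2^2 = x2^3+a*x2+b" and c3: "y3^2 = x3^3+a*x3+b"
    and x12: "x1 \<noteq> x2" and x23: "x2 \<noteq> x3" and x13: "x1 \<noteq> x3"
    and nD: "ec_add a (Pt x1 y1) (Pt x2 y2) \<noteq> Pt x3 (-y3)"
    and nE: "ec_add a (Pt x2 y2) (Pt x3 y3) \<noteq> Pt x1 (-y1)"
  shows "ec_add a (ec_add a (Pt x1 y1) (Pt x2 y2)) (Pt x3 y3) =
         ec_add a (ec_add a (Pt x2 y2) (Pt x3 y3)) (Pt x1 y1)"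
proof -
  obtain l v where L: "y1 = l*x1+v" "y2 = l*x2+v" and anz: "(y3 - l*x3 - v)/((x3-x1)*(x3-x2)) \<noteq> 0"
    and R: "ec_add a (ec_add a (Pt x1 y1) (Pt x2 y2)) (Pt x3 y3) =
      (let al = (y3 - l*x3 - v)/((x3-x1)*(x3-x2));
           x4 = (1 - 2*al*l)/al^2 + x1 + x2 - x3
       in Pt x4 (-(l*x4 + v + al*(x4-x1)*(x4-x2))))"
    using H_pt[OF c1 c2 c3 _ _ _ nD] x12 x13 x23 by metis
  obtain l' v' where L': "y2 = l'*x2+v'" "y3 = l'*x3+v'"
    and R': "ec_add a (ec_add a (Pt x2 y2) (Pt x3 y3)) (Pt x1 y1) =
      (let al = (y1 - l'*x1 - v')/((x1-x2)*(x1-x3));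
           x4 = (1 - 2*al*l')/al^2 + x2 + x3 - x1
       in Pt x4 (-(l'*x4 + v' + al*(x4-x2)*(x4-x3))))"
    using H_pt[OF c2 c3 c1 _ _ _ nE] x12 x13 x23 by metis
  define al where "al = (y3 - l*x3 - v)/((x3-x1)*(x3-x2))"
  define al' where "al' = (y1 - l'*x1 - v')/((x1-x2)*(x1-x3))"
  have p3: "(x3-x1)*(x3-x2) \<noteq> 0" and p1: "(x1-x2)*(x1-x3) \<noteq> 0" using x12 x13 x23 by auto
  have A3: "al * ((x3-x1)*(x3-x2)) = y3 - (l*x3 + v)" using p3 unfolding al_def
    by (simp add: diff_add_eq_diff_diff_swap)
  have A1: "al' * ((x1-x2)*(x1-x3)) = y1 - (l'*x1 + v')" using p1 unfolding al'_def
    by (simp add: diff_add_eq_diff_diff_swap)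
  define c2 where "c2 = al - al'"
  define c1 where "c1 = (l - al*(x1+x2)) - (l' - al'*(x2+x3))"
  define c0 where "c0 = (v + al*x1*x2) - (v' + al'*x2*x3)"
  have "c2*x1^2 + c1*x1 + c0 = 0" unfolding c2_def c1_def c0_def using L A1 by algebra
  moreover have "c2*x2^2 + c1*x2 + c0 = 0" unfolding c2_def c1_def c0_def using L L' by algebra
  moreover have "c2*x3^2 + c1*x3 + c0 = 0" unfolding c2_def c1_def c0_def using L' A3 by algebra
  ultimately have cz: "c2 = 0 \<and> c1 = 0 \<and> c0 = 0" using quad_zero x12 x23 x13 by blast
  have aa: "al' = al" using cz c2_def by simp
  have ll: "l' = l - al*(x1+x2) + al*(x2+x3)" using cz c1_def aa by algebra
  have vv: "v' = v + al*x1*x2 - al*x2*x3" using cz c0_def aa by algebra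
  define x4 where "x4 = (1 - 2*al*l)/al^2 + x1 + x2 - x3"
  have x4': "(1 - 2*al'*l')/al'^2 + x2 + x3 - x1 = x4"
  proof -
    have False: "al \<noteq> 0" using anz al_def by simp
    then show ?thesis unfolding aa ll x4_def by (simp add: field_simps) algebra
  qed
  have y4': "l'*x4 + v' + al'*(x4-x2)*(x4-x3) = l*x4 + v + al*(x4-x1)*(x4-x2)"
    unfolding aa ll vv by algebra
  show ?thesis unfolding R R' Let_def al_def[symmetric] al'_def[symmetric] x4_def[symmetric] x4' y4'
    by simp
qed

lemma assoc_double:
  fixes x1 x3 y1 y3 a b :: complex
  assumes disc: "4*a^3+27*b^2 \<noteq> 0"
    and c1: "y1^2 = x1^3+a*x1+b" and c3: "y3^2 = x3^3+a*x3+b"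
    and y1nz: "y1 \<noteq> 0" and x13: "x3 \<noteq> x1"
    and nD: "ec_add a (Pt x1 y1) (Pt x1 y1) \<noteq> Pt x3 (-y3)"
    and nE: "ec_add a (Pt x1 y1) (Pt x3 y3) \<noteq> Pt x1 (-y1)"
  shows "ec_add a (ec_add a (Pt x1 y1) (Pt x1 y1)) (Pt x3 y3) =
         ec_add a (ec_add a (Pt x1 y1) (Pt x3 y3)) (Pt x1 y1)"
proof -
  have nAA: "\<not>(x1 = x1 \<and> y1 = -y1)" using y1nz by auto
  obtain l v where L: "y1 = l*x1+v" and anz: "(y3 - l*x3 - v)/((x3-x1)*(x3-x1)) \<noteq> 0"
    and e2: "a - 2*l*v = x1*x1 + x1*(l^2-x1-x1) + x1*(l^2-x1-x1)"
    and R: "ec_add a (ec_add a (Pt x1 y1) (Pt x1 y1)) (Pt x3 y3) =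
      (let al = (y3 - l*x3 - v)/((x3-x1)*(x3-x1));
           x4 = (1 - 2*al*l)/al^2 + x1 + x1 - x3
       in Pt x4 (-(l*x4 + v + al*(x4-x1)*(x4-x1))))"
    using H_pt[OF c1 c1 c3 nAA x13 x13 nD] by metis
  have tan: "2*l*y1 = 3*x1^2 + a" using e2 L by algebra
  have nAC: "\<not>(x1 = x3 \<and> y1 = -y3)" using x13 by auto
  obtain l' v' xE yE where h: "ec_add a (Pt x1 y1) (Pt x3 y3) = Pt xE yE"
    "y1 = l'*x1+v'" "y3 = l'*x3+v'" "-yE = l'*xE+v'" "l'^2 = x1+x3+xE"
    "a - 2*l'*v' = x1*x3+x1*xE+x3*xE" "v'^2 - b = x1*x3*xE" "yE^2 = xE^3+a*xE+b"
    using add_line[OF c1 c3 nAC] by metis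
  have nn: "\<not>(xE = x1 \<and> yE = -y1)" using nE h(1) by auto
  have xE1: "xE \<noteq> x1"
  proof
    assume xe: "xE = x1"
    then have "yE^2 = y1^2" using h(8) c1 by simp
    then have "yE = y1 \<or> yE = -y1" by (metis power2_eq_iff)
    then have yE: "yE = y1" using nn xe by auto
    have oA: "on_curve a b (Pt x1 y1)" and oC: "on_curve a b (Pt x3 y3)" using c1 c3 by auto
    have "ec_add a (ec_add a (Pt x3 y3) (Pt x1 y1)) (ec_neg (Pt x1 y1)) = Pt x3 y3"
      using add_cancel[OF oC oA disc] .
    moreover have "ec_add a (Pt x3 y3) (Pt x1 y1) = Pt x1 y1"
      using add_comm[OF oC oA] h(1) xe yE by simp
    ultimately show False by (simp add: add_neg_self)
  qed
  define al where "al = (y3 - l*x3 - v)/((x3-x1)*(x3-x1))"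
  have p3: "(x3-x1)*(x3-x1) \<noteq> 0" using x13 by simp
  have A3: "al * ((x3-x1)*(x3-x1)) = y3 - (l*x3 + v)" using p3 unfolding al_def
    by (simp add: diff_add_eq_diff_diff_swap)
  have alz: "al \<noteq> 0" using anz al_def by simp
  have ll: "al * (x3 - x1) = l' - l"
  proof -
    have "(x3 - x1) * (al * (x3 - x1) - (l' - l)) = 0" using A3 L h(2,3) by algebra
    then show ?thesis using x13 by simp
  qed
  define al' where "al' = (x1 - xE)/(2*y1)"
  have alal: "al' = al"
  proof -
    have "(x3-x1)*(x3-x1)*(2*y1*al - (x1 - xE)) = 0"
      using ll tan h(2,3,5) c1 c3 L by algebra
    then have "2*y1*al = x1 - xE" using x13 by simp
    then show ?thesis unfolding al'_def using y1nz by (simp add: field_simps)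
  qed
  have anz': "al' \<noteq> 0" using xE1 y1nz al'_def by simp
  have q3: "y1 = l'*x1 + v' + al'*(x1-x1)*(x1-x3)" using h(2) by simp
  have K3: "-(x1 - xE) + 2*al'*(l'*x1+v') + al'^2*(x1-x1)*(x1-x3) = 0"
  proof -
    have "2*al'*y1 = x1 - xE" using y1nz unfolding al'_def by simp
    then have "2*al'*(l'*x1+v') = x1 - xE" using h(2) by simp
    then show ?thesis by simp
  qed
  define x4' where "x4' = (1 - 2*al'*l')/al'^2 + x1 + x3 - x1"
  define y4' where "y4' = l'*x4' + v' + al'*(x4'-x1)*(x4'-x3)"
  have RE: "ec_add a (Pt xE yE) (Pt x1 y1) = Pt x4' (-y4')"
    using H_lemma[OF h(8) c1 _ _ h(4) anz' q3 K3 nn x4'_def y4'_def] h(5,6)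
    by (simp add: algebra_simps)
  define x4 where "x4 = (1 - 2*al*l)/al^2 + x1 + x1 - x3"
  have x44: "x4' = x4"
  proof -
    have "l' = l + al*(x3-x1)" using ll by simp
    then show ?thesis unfolding x4'_def x4_def alal using alz by (simp add: field_simps) algebra
  qed
  have y44: "y4' = l*x4 + v + al*(x4-x1)*(x4-x1)"
  proof -
    have l': "l' = l + al*(x3-x1)" using ll by simp
    have v': "v' = v - al*(x3-x1)*x1" using l' L h(2) by algebra
    show ?thesis unfolding y4'_def x44 alal l' v' by algebra
  qed
  show ?thesis unfolding R h(1) RE Let_def al_def[symmetric] x4_def[symmetric] x44 y44
    by simp
qed

lemma cancel_left:
  assumes "on_curve a b X" "on_curve a b Y" "4*a^3+27*b^2 \<noteq> 0"
  shows "ec_add a (ec_neg Y) (ec_add a Y X) = X"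
proof -
  have 1: "ec_add a (ec_add a X Y) (ec_neg Y) = X" using add_cancel assms by blast
  have 2: "ec_add a X Y = ec_add a Y X" using add_comm assms by blast
  have 3: "on_curve a b (ec_add a Y X)" using on_curve_add assms by blast
  have 4: "ec_add a (ec_add a Y X) (ec_neg Y) = ec_add a (ec_neg Y) (ec_add a Y X)"
    by (rule add_comm[OF 3]) (simp add: assms)
  show ?thesis using 1 unfolding 2 4 .
qed

lemma sq_cases: "(u::complex)^2 = w \<Longrightarrow> v^2 = w \<Longrightarrow> u = v \<or> u = -v"
  by (metis power2_eq_iff)

lemma add_neg_self_left: "ec_add a (ec_neg P) P = Infty"
  by (cases P) auto

lemma ec_assoc:
  assumes oX: "on_curve a b X" and oY: "on_curve a b Y" and oZ: "on_curve a b Z"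
    and disc: "4*a^3+27*b^2 \<noteq> 0"
  shows "ec_add a (ec_add a X Y) Z = ec_add a X (ec_add a Y Z)"
proof -
  note C = add_comm[of a b]
  have oXY: "on_curve a b (ec_add a X Y)" and oYZ: "on_curve a b (ec_add a Y Z)"
    and oXZ: "on_curve a b (ec_add a X Z)" and oYX: "on_curve a b (ec_add a Y X)"
    using on_curve_add oX oY oZ by blast+
  have onX: "on_curve a b (ec_neg X)" and onY: "on_curve a b (ec_neg Y)" and onZ: "on_curve a b (ec_neg Z)"
    using oX oY oZ by simp_all
  show ?thesis
  proof (cases "Y = ec_neg X")
    case True
    have "ec_add a X Y = Infty" using True add_neg_self by simp
    moreover have "ec_add a X (ec_add a Y Z) = Z"
      using cancel_left[OF oZ oY disc] True by simp
    ultimately show ?thesis by simp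
  next
    case nYX: False
    show ?thesis
    proof (cases "Z = ec_neg Y")
      case True
      have "ec_add a (ec_add a X Y) Z = X" using True add_cancel[OF oX oY disc] by simp
      moreover have "ec_add a Y Z = Infty" using True add_neg_self by simp
      ultimately show ?thesis by simp
    next
      case nZY: False
      show ?thesis
      proof (cases "ec_add a X Y = ec_neg Z")
        case True
        have Z: "Z = ec_add a (ec_neg X) (ec_neg Y)"
          using True neg_add[OF oX oY] by (metis neg_neg)
        have "ec_add a Y Z = ec_add a (ec_neg (ec_neg Y)) (ec_add a (ec_neg Y) (ec_neg X))"
          unfolding Z C[OF onX onY] by simp
        also have "\<dots> = ec_neg X" by (rule cancel_left[OF onX onY disc])
        finally have "ec_add a Y Z = ec_neg X" .
        then show ?thesis using True add_neg_self add_neg_self_left by simp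
      next
        case nXYZ: False
        show ?thesis
        proof (cases "ec_add a Y Z = ec_neg X")
          case True
          have X: "X = ec_add a (ec_neg Y) (ec_neg Z)" using True neg_add[OF oY oZ] by (metis neg_neg)
          have "ec_add a X Y = ec_add a Y (ec_add a (ec_neg Z) (ec_neg Y))"
            unfolding X C[OF onY onZ] by (rule C) (simp_all add: on_curve_add oY oZ)
          also have "\<dots> = ec_add a Y (ec_add a (ec_neg Y) (ec_neg Z))"
            by (rule arg_cong[where f="ec_add a Y", OF C[OF onZ onY]])
          also have "\<dots> = ec_neg Z" using cancel_left[OF onZ onY disc] by simp
          finally show ?thesis using True add_neg_self add_neg_self_left by simp
        next
          case nYZX: False
          show ?thesis
          proof (cases X)
            case Infty then show ?thesis by simp
          next
            case (Pt x1 y1) note X = this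
            show ?thesis
            proof (cases Y)
              case Infty then show ?thesis by simp
            next
              case (Pt x2 y2) note Y = this
              show ?thesis
              proof (cases Z)
                case Infty then show ?thesis by simp
              next
                case (Pt x3 y3) note Z = this
                have c1: "y1^2 = x1^3+a*x1+b" and c2: "y2^2 = x2^3+a*x2+b"
                  and c3: "y3^2 = x3^3+a*x3+b" using oX oY oZ X Y Z by auto
                show ?thesis
                proof (cases "x1 = x2")
                  case x12: True
                  have "y1 = y2 \<or> y1 = -y2" using sq_cases[OF c1] c2 x12 by simp
                  then have y12: "y1 = y2" using nYX X Y x12 by auto
                  have y1nz: "y1 \<noteq> 0" using y12 x12 nYX X Y by auto
                  have YX: "Y = X" using X Y x12 y12 by simp
                  show ?thesis
                  proof (cases "x3 = x1")
                    case True
                    have "y3 = y1 \<or> y3 = -y1" using sq_cases[OF c3] c1 True by simp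
                    then have "y3 = y1" using nZY Y Z x12 y12 True by auto
                    then have "Z = X" using True X Z by auto
                    then show ?thesis unfolding YX using C[OF oX oXY] YX by simp
                  next
                    case False
                    have n1: "ec_add a (Pt x1 y1) (Pt x1 y1) \<noteq> Pt x3 (-y3)"
                      using nXYZ unfolding X Y Z ec_neg.simps x12 y12 .
                    have n2: "ec_add a (Pt x1 y1) (Pt x3 y3) \<noteq> Pt x1 (-y1)"
                      using nYZX unfolding X Y Z ec_neg.simps x12 y12 .
                    have "ec_add a (ec_add a X X) Z = ec_add a (ec_add a X Z) X"
                      using assoc_double[OF disc c1 c3 y1nz False n1 n2] unfolding X Z .
                    then show ?thesis unfolding YX using C[OF oXZ oX] by simp
                  qed
                next
                  case x12: False
                  show ?thesis
                  proof (cases "x2 = x3")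
                    case x23: True
                    have "y2 = y3 \<or> y2 = -y3" using sq_cases[OF c2] c3 x23 by simp
                    then have y23: "y2 = y3" using nZY Y Z x23 by auto
                    have y2nz: "y2 \<noteq> 0" using y23 x23 nZY Y Z by auto
                    have ZY: "Z = Y" using Y Z x23 y23 by simp
                    have n1: "ec_add a (Pt x2 y2) (Pt x2 y2) \<noteq> Pt x1 (-y1)"
                      using nYZX unfolding X Y Z ec_neg.simps x23 y23 .
                    have n2: "ec_add a (Pt x2 y2) (Pt x1 y1) \<noteq> Pt x2 (-y2)"
                    proof -
                      have "ec_add a Y X \<noteq> ec_neg Z" using nXYZ C[OF oX oY] by metis
                      then show ?thesis unfolding X Y Z ec_neg.simps x23 y23 .
                    qed
                    have x21: "x1 \<noteq> x2" using x12 .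
                    have "ec_add a (ec_add a Y Y) X = ec_add a (ec_add a Y X) Y"
                      using assoc_double[OF disc c2 c1 y2nz _ n1 n2] x21 unfolding X Y by blast
                    moreover have "ec_add a Y X = ec_add a X Y" by (rule C[OF oY oX])
                    moreover have "ec_add a (ec_add a Y Y) X = ec_add a X (ec_add a Y Y)"
                      by (rule C) (simp_all add: oX oY on_curve_add)
                    ultimately show ?thesis unfolding ZY by simp
                  next
                    case x23: False
                    show ?thesis
                    proof (cases "x1 = x3")
                      case x13: True
                      have "y1 = y3 \<or> y1 = -y3" using sq_cases[OF c1] c3 x13 by simp
                      then show ?thesis
                      proof
                        assume "y1 = y3"
                        then have ZX: "Z = X" using X Z x13 by simp
                        have "ec_add a (ec_add a X Y) X = ec_add a X (ec_add a X Y)" by (rule C[OF oXY oX])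
                        also have "\<dots> = ec_add a X (ec_add a Y X)" unfolding C[OF oX oY] ..
                        finally show ?thesis unfolding ZX .
                      next
                        assume "y1 = -y3"
                        then have ZX: "Z = ec_neg X" using X Z x13 by simp
                        have "ec_add a (ec_add a X Y) Z = Y"
                          using ZX add_cancel[OF oY oX disc] C[OF oX oY] by simp
                        moreover have "ec_add a X (ec_add a Y Z) = Y"
                        proof -
                          have "ec_add a (ec_add a Y Z) (ec_neg Z) = Y" using add_cancel[OF oY oZ disc] .
                          moreover have "ec_add a (ec_add a Y Z) (ec_neg Z) = ec_add a X (ec_add a Y Z)"
                            using C[OF oYZ onZ] ZX by simp
                          ultimately show ?thesis by simp
                        qed
                        ultimately show ?thesis by simp
                      qed
                    next
                      case x13: False
                      have n1: "ec_add a (Pt x1 y1) (Pt x2 y2) \<noteq> Pt x3 (-y3)"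
                        using nXYZ unfolding X Y Z ec_neg.simps .
                      have n2: "ec_add a (Pt x2 y2) (Pt x3 y3) \<noteq> Pt x1 (-y1)"
                        using nYZX unfolding X Y Z ec_neg.simps .
                      have "ec_add a (ec_add a X Y) Z = ec_add a (ec_add a Y Z) X"
                        using assoc_generic[OF c1 c2 c3 x12 x23 x13 n1 n2] unfolding X Y Z .
                      then show ?thesis using C[OF oYZ oX] by simp
                    qed
                  qed
                qed
              qed
            qed
          qed
        qed
      qed
    qed
  qed
qed

lemma on_curve_nmul: "on_curve a b X \<Longrightarrow> on_curve a b (ec_nmul a n X)"
  by (induct n) (auto intro: on_curve_add)

lemma nmul_add:
  assumes "on_curve a b X" "4*a^3+27*b^2 \<noteq> 0"
  shows "ec_nmul a (i + j) X = ec_add a (ec_nmul a i X) (ec_nmul a j X)"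
proof (induct i)
  case 0 then show ?case by simp
next
  case (Suc i)
  have "ec_nmul a (Suc i + j) X = ec_add a X (ec_nmul a (i + j) X)" by simp
  also have "\<dots> = ec_add a X (ec_add a (ec_nmul a i X) (ec_nmul a j X))" using Suc by simp
  also have "\<dots> = ec_add a (ec_add a X (ec_nmul a i X)) (ec_nmul a j X)"
    using ec_assoc[OF assms(1) on_curve_nmul[OF assms(1)] on_curve_nmul[OF assms(1)] assms(2)] by simp
  finally show ?case by simp
qed

lemma nmul_mult:
  assumes "on_curve a b X" "4*a^3+27*b^2 \<noteq> 0"
  shows "ec_nmul a (i * j) X = ec_nmul a i (ec_nmul a j X)"
proof (induct i)
  case 0 then show ?case by simp
next
  case (Suc i)
  have "ec_nmul a (Suc i * j) X = ec_nmul a (j + i * j) X" by simp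
  also have "\<dots> = ec_add a (ec_nmul a j X) (ec_nmul a (i * j) X)" using nmul_add[OF assms] by blast
  finally show ?case using Suc by simp
qed

definition slope :: "complex \<Rightarrow> complex \<Rightarrow> complex \<Rightarrow> complex \<Rightarrow> complex \<Rightarrow> complex" where
  "slope a x1 y1 x2 y2 = (if x1 = x2 then (3*x1^2+a)/(2*y1) else (y2-y1)/(x2-x1))"

lemma ec_add_gen:
  "\<not>(x1 = x2 \<and> y1 = -y2) \<Longrightarrow> ec_add a (Pt x1 y1) (Pt x2 y2) =
    Pt ((slope a x1 y1 x2 y2)^2 - x1 - x2)
       (slope a x1 y1 x2 y2 * (x1 - ((slope a x1 y1 x2 y2)^2 - x1 - x2)) - y1)"
  by (simp add: slope_def Let_def)

lemma wsub0[simp]: "wsub u 0 0 0 (Pt x y) = Pt (u^2*x) (u^3*y)" "wsub u 0 0 0 Infty = Infty"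
  by (simp_all add: wsub_def)

lemma slope_scale:
  assumes "u \<noteq> 0" "u^4*a = a"
  shows "slope a (u^2*x1) (u^3*y1) (u^2*x2) (u^3*y2) = u * slope a x1 y1 x2 y2"
proof (cases "x1 = x2")
  case True
  have "(3*(u^2*x1)^2+a)/(2*(u^3*y1)) = (u^4*(3*x1^2+a))/(2*(u^3*y1))"
    using assms(2) by (simp add: algebra_simps power_mult_distrib)
  also have "\<dots> = u * ((3*x1^2+a)/(2*y1))" using assms(1)
    by (cases "y1 = 0") (simp_all add: field_simps power3_eq_cube power4_eq_xxxx)
  finally show ?thesis using True assms(1) by (simp add: slope_def)
next
  case False
  then show ?thesis using assms(1)
    by (simp add: slope_def field_simps power3_eq_cube power2_eq_square)
qed

lemma wsub_add:
  assumes "u \<noteq> 0" "u^4*a = a"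
  shows "wsub u 0 0 0 (ec_add a P Q) = ec_add a (wsub u 0 0 0 P) (wsub u 0 0 0 Q)"
proof (cases P; cases Q)
  fix x1 y1 x2 y2 assume P: "P = Pt x1 y1" and Q: "Q = Pt x2 y2"
  show ?thesis
  proof (cases "x1 = x2 \<and> y1 = -y2")
    case True then show ?thesis using P Q by simp
  next
    case False
    have F: "\<not>(u^2*x1 = u^2*x2 \<and> u^3*y1 = -(u^3*y2))"
    proof
      assume h: "u^2*x1 = u^2*x2 \<and> u^3*y1 = -(u^3*y2)"
      then have "u^2*(x1 - x2) = 0" "u^3*(y1 + y2) = 0" by (simp_all add: algebra_simps)
      then have "x1 = x2" "y1 = -y2" using assms(1) by (simp_all add: add_eq_0_iff)
      then show False using False by simp
    qed
    show ?thesis unfolding P Q ec_add_gen[OF False] wsub0 ec_add_gen[OF F] slope_scale[OF assms]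
      by (simp add: algebra_simps power2_eq_square power3_eq_cube)
  qed
qed (simp_all)

lemma wsub_nmul:
  assumes "u \<noteq> 0" "u^4*a = a"
  shows "wsub u 0 0 0 (ec_nmul a n P) = ec_nmul a n (wsub u 0 0 0 P)"
  by (induct n) (simp_all add: wsub_add[OF assms])

lemma aut_form:
  assumes "ec_aut a b psi"
  shows "\<exists>u. u \<noteq> 0 \<and> u^4*a = a \<and> u^6*b = b \<and> psi = wsub u 0 0 0"
proof -
  obtain u r s t where u: "u \<noteq> 0" and psi: "psi = wsub u r s t"
    and cur: "\<forall>P. on_curve a b P \<longrightarrow> on_curve a b (wsub u r s t P)"
    using assms unfolding ec_aut_def by blast
  have E: "(u^3*y + s*u^2*x + t)^2 = (u^2*x+r)^3 + a*(u^2*x+r) + b"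
    if "y^2 = x^3+a*x+b" for x y
  proof -
    have "on_curve a b (Pt x y)" using that by simp
    then have "on_curve a b (wsub u r s t (Pt x y))" using cur by blast
    then show ?thesis by (simp add: wsub_def)
  qed
  have st: "s*u^2*x + t = 0" if "x^3+a*x+b \<noteq> 0" for x
  proof -
    define y where "y = csqrt (x^3+a*x+b)"
    have y2: "y^2 = x^3+a*x+b" unfolding y_def by simp
    have ynz: "y \<noteq> 0" using y2 that by auto
    have y2': "(-y)^2 = x^3+a*x+b" using y2 by simp
    have "4*u^3*y*(s*u^2*x + t) = 0" using E[OF y2] E[OF y2'] by algebra
    then show ?thesis using u ynz by simp
  qed
  have fin: "finite {x. poly [:b, a, 0, 1:] x = 0}" by (rule poly_roots_finite) simp
  have pe: "poly [:b, a, 0, 1:] x = x^3+a*x+b" for x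
    by (simp add: algebra_simps power3_eq_cube)
  have fin2: "finite {x. x^3+a*x+b = 0}" using fin unfolding pe .
  obtain x0 where x0: "x0 \<notin> {x. x^3+a*x+b = 0}"
    using ex_new_if_finite[OF infinite_UNIV_char_0 fin2] by blast
  obtain x1 where x1: "x1 \<notin> insert x0 {x. x^3+a*x+b = 0}"
    using ex_new_if_finite[OF infinite_UNIV_char_0] fin2 by (metis finite_insert)
  have "s*u^2*x0 + t = 0" "s*u^2*x1 + t = 0" using st x0 x1 by auto
  then have "s*u^2*(x0 - x1) = 0" by algebra
  then have s0: "s = 0" using u x1 by auto
  then have t0: "t = 0" using \<open>s*u^2*x0 + t = 0\<close> by simp
  have E2: "u^6*(x^3+a*x+b) = (u^2*x+r)^3 + a*(u^2*x+r) + b" for x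
  proof -
    define y where "y = csqrt (x^3+a*x+b)"
    have y2: "y^2 = x^3+a*x+b" unfolding y_def by simp
    have "(u^3*y)^2 = (u^2*x+r)^3 + a*(u^2*x+r) + b" using E[OF y2] s0 t0 by simp
    then show ?thesis using y2 by algebra
  qed
  have e0: "u^6*b = r^3 + a*r + b" using E2[of 0] by simp
  have e1: "u^6*(1+a+b) = (u^2+r)^3 + a*(u^2+r) + b" using E2[of 1] by simp
  have em: "u^6*(-1-a+b) = (r-u^2)^3 + a*(r-u^2) + b" using E2[of "-1"] by (simp add: algebra_simps)
  have "6*u^4*r = 0" using e0 e1 em by algebra
  then have r0: "r = 0" using u by simp
  have "u^2*(u^4*a - a) = 0" using e1 em r0 by algebra
  then have ua: "u^4*a = a" using u by simp
  have ub: "u^6*b = b" using e0 r0 by simp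
  show ?thesis using u ua ub psi r0 s0 t0 by blast
qed

lemma rat_sq_int:
  fixes q :: real and d :: int
  assumes "q \<in> \<rat>" "q^2 = of_int d" "squarefree d" "d \<noteq> 1"
  shows False
proof -
  obtain a b :: int where b: "b > 0" and cop: "coprime a b" and q: "q = of_int a / of_int b"
    using Rats_cases'[OF assms(1)] by blast
  have "(of_int a / of_int b)^2 = (of_int d :: real)" using assms(2) q by simp
  then have "(of_int a)^2 = (of_int d * (of_int b)^2 :: real)" using b
    by (simp add: field_simps power2_eq_square)
  then have ab: "a^2 = d * b^2" by (metis of_int_eq_iff of_int_mult of_int_power)
  have h: "b^2 dvd a^2" using ab by simp
  have cop2: "coprime (a^2) (b^2)" using cop by simp
  have "is_unit (b^2)" by (rule coprime_common_divisor[OF cop2 h dvd_refl])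
  then have "\<bar>b^2\<bar> = 1" by (simp only: zdvd1_eq)
  then have "b^2 = 1" by simp
  then have d: "d = a^2" using ab by simp
  then have "a^2 dvd d" by simp
  then have "is_unit a" by (rule squarefreeD[OF assms(3)])
  then have "\<bar>a\<bar> = 1" by (simp only: zdvd1_eq)
  then have "a^2 = 1" by (metis power2_abs power_one)
  then show False using d assms(4) by simp
qed

definition sqd :: "int \<Rightarrow> complex" where "sqd d = csqrt (of_int d)"

lemma sqd_sq: "(sqd d)^2 = of_int d" by (simp add: sqd_def)

lemma sqd_indep:
  assumes sf: "squarefree d" and d1: "d \<noteq> 1"
    and rs: "r \<in> \<rat>" "s \<in> \<rat>" "r' \<in> \<rat>" "s' \<in> \<rat>"
    and eq: "of_real r + of_real s * sqd d = of_real r' + of_real s' * sqd d"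
  shows "r = r' \<and> s = s'"
proof (cases "s = s'")
  case True then show ?thesis using eq by simp
next
  case False
  have "of_real (s - s') * sqd d = of_real (r' - r)" using eq by (simp add: algebra_simps)
  then have w: "sqd d = of_real ((r' - r)/(s - s'))" using False
    by (simp add: field_simps)
  define q where "q = (r' - r)/(s - s')"
  have qr: "q \<in> \<rat>" using rs unfolding q_def by simp
  have "of_real (q^2) = (of_int d :: complex)" using w sqd_sq[of d] q_def by simp
  then have "q^2 = of_int d" by (metis of_real_eq_iff of_real_of_int_eq)
  then show ?thesis using rat_sq_int[OF qr _ sf d1] by simp
qed

lemma quad_field_iff: "z \<in> quad_field d \<longleftrightarrow> (\<exists>r s. r \<in> \<rat> \<and> s \<in> \<rat> \<and> z = of_real r + of_real s * sqd d)"
  by (auto simp: quad_field_def sqd_def)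

lemma quad_conj_eq:
  assumes sf: "squarefree d" and d1: "d \<noteq> 1" and rs: "r \<in> \<rat>" "s \<in> \<rat>"
  shows "quad_conj d (of_real r + of_real s * sqd d) = of_real r - of_real s * sqd d"
  unfolding quad_conj_def sqd_def[symmetric]
proof (rule the_equality)
  show "\<exists>r' s'. r' \<in> \<rat> \<and> s' \<in> \<rat> \<and> of_real r + of_real s * sqd d = of_real r' + of_real s' * sqd d \<and>
      of_real r - of_real s * sqd d = of_real r' - of_real s' * sqd d" using rs by blast
next
  fix w assume "\<exists>r' s'. r' \<in> \<rat> \<and> s' \<in> \<rat> \<and> of_real r + of_real s * sqd d = of_real r' + of_real s' * sqd d \<and>
      w = of_real r' - of_real s' * sqd d"
  then obtain r' s' where h: "r' \<in> \<rat>" "s' \<in> \<rat>" "of_real r + of_real s * sqd d = of_real r' + of_real s' * sqd d"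
      "w = of_real r' - of_real s' * sqd d" by blast
  then have "r = r' \<and> s = s'" using sqd_indep[OF sf d1 rs h(1,2,3)] by blast
  then show "w = of_real r - of_real s * sqd d" using h(4) by simp
qed

locale qf =
  fixes d :: int
  assumes sf: "squarefree d" and d1: "d \<noteq> 1"
begin

abbreviation "K \<equiv> quad_field d"
abbreviation "tau \<equiv> quad_conj d"

lemma KE:
  assumes "z \<in> K"
  obtains r s where "r \<in> \<rat>" "s \<in> \<rat>" "z = of_real r + of_real s * sqd d"
  using assms quad_field_iff by blast

lemma KI: "r \<in> \<rat> \<Longrightarrow> s \<in> \<rat> \<Longrightarrow> of_real r + of_real s * sqd d \<in> K"
  using quad_field_iff by blast

lemma tau_rep: "r \<in> \<rat> \<Longrightarrow> s \<in> \<rat> \<Longrightarrow> tau (of_real r + of_real s * sqd d) = of_real r - of_real s * sqd d"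
  using quad_conj_eq[OF sf d1] by blast

lemma KI': "z = of_real r + of_real s * sqd d \<Longrightarrow> r \<in> \<rat> \<Longrightarrow> s \<in> \<rat> \<Longrightarrow> z \<in> K"
  using KI by blast

lemma tau_rep': "z = of_real r + of_real s * sqd d \<Longrightarrow> r \<in> \<rat> \<Longrightarrow> s \<in> \<rat> \<Longrightarrow> tau z = of_real r - of_real s * sqd d"
  using tau_rep by blast

lemma Rats_K: assumes "(q::complex) \<in> \<rat>" shows "q \<in> K" "tau q = q"
proof -
  obtain a b :: int where ab: "q = of_int a / of_int b" using Rats_cases'[OF assms] by blast
  define t :: real where "t = of_int a / of_int b"
  have t: "q = of_real t" unfolding ab t_def by simp
  have tq: "t \<in> \<rat>" unfolding t_def by simp
  have e: "q = of_real t + of_real 0 * sqd d" using t by simp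
  show "q \<in> K" using KI'[OF e tq] by simp
  show "tau q = q" using tau_rep'[OF e tq] t by simp
qed

lemma K_add: assumes "z1 \<in> K" "z2 \<in> K" shows "z1 + z2 \<in> K" "tau (z1 + z2) = tau z1 + tau z2"
proof -
  obtain r1 s1 where 1: "r1 \<in> \<rat>" "s1 \<in> \<rat>" "z1 = of_real r1 + of_real s1 * sqd d" using assms(1) KE by blast
  obtain r2 s2 where 2: "r2 \<in> \<rat>" "s2 \<in> \<rat>" "z2 = of_real r2 + of_real s2 * sqd d" using assms(2) KE by blast
  have e: "z1 + z2 = of_real (r1+r2) + of_real (s1+s2) * sqd d" using 1 2 by (simp add: algebra_simps)
  have q: "r1+r2 \<in> \<rat>" "s1+s2 \<in> \<rat>" using 1 2 by simp_all
  show "z1 + z2 \<in> K" using KI'[OF e q] .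
  have "tau z1 = of_real r1 - of_real s1 * sqd d" "tau z2 = of_real r2 - of_real s2 * sqd d"
    using tau_rep' 1 2 by blast+
  note t12 = this
  have "tau (z1 + z2) = of_real (r1+r2) - of_real (s1+s2) * sqd d" by (rule tau_rep'[OF e q])
  also have "\<dots> = (of_real r1 - of_real s1 * sqd d) + (of_real r2 - of_real s2 * sqd d)"
    by (simp add: algebra_simps)
  finally show "tau (z1 + z2) = tau z1 + tau z2" unfolding t12 .
qed

lemma K_neg: assumes "z \<in> K" shows "- z \<in> K" "tau (- z) = - tau z"
proof -
  obtain r s where 1: "r \<in> \<rat>" "s \<in> \<rat>" "z = of_real r + of_real s * sqd d" using assms KE by blast
  have e: "- z = of_real (-r) + of_real (-s) * sqd d" using 1 by simp
  have q: "-r \<in> \<rat>" "-s \<in> \<rat>" using 1 by simp_all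
  show "- z \<in> K" using KI'[OF e q] .
  have "tau z = of_real r - of_real s * sqd d" using tau_rep' 1 by blast
  then show "tau (- z) = - tau z" using tau_rep'[OF e q] by simp
qed

lemma K_diff: assumes "z1 \<in> K" "z2 \<in> K" shows "z1 - z2 \<in> K" "tau (z1 - z2) = tau z1 - tau z2"
  using K_add[OF assms(1) K_neg(1)[OF assms(2)]] K_neg[OF assms(2)] by simp_all

lemma K_mult: assumes "z1 \<in> K" "z2 \<in> K" shows "z1 * z2 \<in> K" "tau (z1 * z2) = tau z1 * tau z2"
proof -
  obtain r1 s1 where 1: "r1 \<in> \<rat>" "s1 \<in> \<rat>" "z1 = of_real r1 + of_real s1 * sqd d" using assms(1) KE by blast
  obtain r2 s2 where 2: "r2 \<in> \<rat>" "s2 \<in> \<rat>" "z2 = of_real r2 + of_real s2 * sqd d" using assms(2) KE by blast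
  have w2: "sqd d ^ 2 = of_real (of_int d)" using sqd_sq[of d] by simp
  have e: "z1 * z2 = of_real (r1*r2 + s1*s2*of_int d) + of_real (r1*s2+s1*r2) * sqd d"
  proof -
    have "z1 * z2 = of_real r1 * of_real r2 + of_real s1 * of_real s2 * sqd d ^ 2 + (of_real r1 * of_real s2 + of_real s1 * of_real r2) * sqd d"
      unfolding 1(3) 2(3) by algebra
    then show ?thesis unfolding w2 by simp
  qed
  have t1: "tau z1 = of_real r1 - of_real s1 * sqd d" and t2: "tau z2 = of_real r2 - of_real s2 * sqd d"
    using tau_rep' 1 2 by blast+
  have e': "tau z1 * tau z2 = of_real (r1*r2 + s1*s2*of_int d) - of_real (r1*s2+s1*r2) * sqd d"
  proof -
    have "tau z1 * tau z2 = of_real r1 * of_real r2 + of_real s1 * of_real s2 * sqd d ^ 2 - (of_real r1 * of_real s2 + of_real s1 * of_real r2) * sqd d"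
      unfolding t1 t2 by algebra
    then show ?thesis unfolding w2 by simp
  qed
  have q: "r1*r2 + s1*s2*of_int d \<in> \<rat>" "r1*s2+s1*r2 \<in> \<rat>" using 1 2 by simp_all
  show "z1 * z2 \<in> K" using KI'[OF e q] .
  show "tau (z1 * z2) = tau z1 * tau z2" using tau_rep'[OF e q] e' by simp
qed

lemma K_inv: assumes "z \<in> K" shows "inverse z \<in> K" "tau (inverse z) = inverse (tau z)"
proof -
  obtain r s where 1: "r \<in> \<rat>" "s \<in> \<rat>" "z = of_real r + of_real s * sqd d" using assms KE by blast
  define N where "N = r^2 - s^2 * of_int d"
  have w2: "sqd d ^ 2 = of_real (of_int d)" using sqd_sq[of d] by simp
  have t: "tau z = of_real r - of_real s * sqd d" using tau_rep' 1 by blast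
  have main: "inverse z \<in> K \<and> tau (inverse z) = inverse (tau z)"
  proof (cases "z = 0")
    case True
    have e: "(0::complex) = of_real 0 + of_real 0 * sqd d" by simp
    have "(0::complex) \<in> K" using KI'[OF e] by simp
    moreover have "tau 0 = 0" using tau_rep'[OF e] by simp
    ultimately show ?thesis using True by simp
  next
    case False
    have Nnz: "N \<noteq> 0"
    proof
      assume N0: "N = 0"
      show False
      proof (cases "s = 0")
        case True then show False using N0 N_def 1 False by simp
      next
        case sn: False
        have "(r/s)^2 = of_int d" using N0 sn unfolding N_def by (simp add: field_simps)
        moreover have "r/s \<in> \<rat>" using 1 by simp
        ultimately show False using rat_sq_int[of "r/s" d] sf d1 by blast
      qed
    qed
    have prod: "z * tau z = (of_real N :: complex)"
    proof -
      have "z * tau z = of_real r ^ 2 - of_real s ^ 2 * sqd d ^ 2" using t 1(3) by algebra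
      then show ?thesis unfolding w2 N_def by simp
    qed
    have NC: "(of_real N :: complex) \<noteq> 0" using Nnz by simp
    have tnz: "tau z \<noteq> 0" using prod NC by auto
    have inv: "inverse z = of_real (r/N) + of_real (-s/N) * sqd d"
    proof -
      have "inverse z = tau z / of_real N" using prod False NC by (simp add: field_simps)
      then show ?thesis unfolding t using NC by (simp add: field_simps)
    qed
    have tinv: "inverse (tau z) = of_real (r/N) - of_real (-s/N) * sqd d"
    proof -
      have "inverse (tau z) = z / of_real N" using prod tnz NC by (simp add: field_simps)
      then show ?thesis unfolding 1(3) using NC by (simp add: field_simps)
    qed
    have q: "r/N \<in> \<rat>" "-s/N \<in> \<rat>" using 1 N_def by simp_all
    show ?thesis using KI'[OF inv q] tau_rep'[OF inv q] tinv by simp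
  qed
  then show "inverse z \<in> K" "tau (inverse z) = inverse (tau z)" by simp_all
qed

lemma K_div: assumes "z1 \<in> K" "z2 \<in> K" shows "z1 / z2 \<in> K" "tau (z1 / z2) = tau z1 / tau z2"
  using K_mult[OF assms(1) K_inv(1)[OF assms(2)]] K_inv[OF assms(2)] by (simp_all add: divide_inverse)

lemma K_pow2: assumes "z \<in> K" shows "z^2 \<in> K" "tau (z^2) = (tau z)^2"
  using K_mult[OF assms assms] by (simp_all add: power2_eq_square)

lemma tau_fix: assumes "z \<in> K" "tau z = z" shows "z \<in> \<rat>"
proof -
  obtain r s where 1: "r \<in> \<rat>" "s \<in> \<rat>" "z = of_real r + of_real s * sqd d" using assms KE by blast
  have "of_real r - of_real s * sqd d = of_real r + of_real s * sqd d" using assms(2) tau_rep'[OF 1(3) 1(1,2)] 1(3) by simp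
  then have "of_real r + of_real (-s) * sqd d = of_real r + of_real s * sqd d" by simp
  then have "-s = s" using sqd_indep[OF sf d1, of r "-s" r s] 1 by simp
  then have "s = 0" by simp
  then have "z = of_real r" using 1 by simp
  then show ?thesis using 1(1) Rats_complex_of_real_iff by blast
qed

lemma tau_inj: assumes "z1 \<in> K" "z2 \<in> K" "tau z1 = tau z2" shows "z1 = z2"
proof -
  have "tau (z1 - z2) = 0" using K_diff[OF assms(1,2)] assms(3) by simp
  moreover have "z1 - z2 \<in> K" using K_diff[OF assms(1,2)] by simp
  obtain r s where 1: "r \<in> \<rat>" "s \<in> \<rat>" "z1 - z2 = of_real r + of_real s * sqd d"
    using \<open>z1 - z2 \<in> K\<close> KE by blast
  have "of_real r - of_real s * sqd d = 0" using \<open>tau (z1 - z2) = 0\<close> tau_rep'[OF 1(3) 1(1,2)] by simp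
  then have "of_real r + of_real (-s) * sqd d = of_real 0 + of_real 0 * sqd d" by simp
  then have "r = 0 \<and> -s = 0" using sqd_indep[OF sf d1, of r "-s" 0 0] 1 by simp
  then show ?thesis using 1 by simp
qed

end

context qf
begin

lemma num_K: "(3::complex) \<in> K" "tau 3 = 3" "(2::complex) \<in> K" "tau 2 = 2"
  using Rats_K[of 3] Rats_K[of 2] by simp_all

lemma slope_K:
  assumes "x1 \<in> K" "y1 \<in> K" "x2 \<in> K" "y2 \<in> K" "a \<in> \<rat>"
  shows "slope a x1 y1 x2 y2 \<in> K \<and> tau (slope a x1 y1 x2 y2) = slope a (tau x1) (tau y1) (tau x2) (tau y2)"
proof (cases "x1 = x2")
  case True
  have aK: "a \<in> K" "tau a = a" using Rats_K[OF assms(5)] by simp_all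
  have n1: "3*x1^2 + a \<in> K" "tau (3*x1^2 + a) = 3*(tau x1)^2 + a"
    using K_add[OF K_mult(1)[OF num_K(1) K_pow2(1)[OF assms(1)]] aK(1)]
      K_mult[OF num_K(1) K_pow2(1)[OF assms(1)]] K_pow2[OF assms(1)] num_K aK by simp_all
  have d1: "2*y1 \<in> K" "tau (2*y1) = 2 * tau y1" using K_mult[OF num_K(3) assms(2)] num_K by simp_all
  have "(3*x1^2 + a)/(2*y1) \<in> K" "tau ((3*x1^2 + a)/(2*y1)) = (3*(tau x1)^2 + a)/(2 * tau y1)"
    using K_div[OF n1(1) d1(1)] n1(2) d1(2) by simp_all
  then show ?thesis using True by (simp add: slope_def)
next
  case False
  have ne: "tau x1 \<noteq> tau x2" using tau_inj[OF assms(1,3)] False by blast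
  have "(y2-y1)/(x2-x1) \<in> K" "tau ((y2-y1)/(x2-x1)) = (tau y2 - tau y1)/(tau x2 - tau x1)"
    using K_div[OF K_diff(1)[OF assms(4,2)] K_diff(1)[OF assms(3,1)]] K_diff[OF assms(4,2)] K_diff[OF assms(3,1)]
    by simp_all
  then show ?thesis using False ne by (simp add: slope_def)
qed

lemma tau_add:
  assumes "pt_in K P" "pt_in K Q" "a \<in> \<rat>"
  shows "pt_in K (ec_add a P Q) \<and> pt_map tau (ec_add a P Q) = ec_add a (pt_map tau P) (pt_map tau Q)"
proof (cases P; cases Q)
  fix x1 y1 x2 y2 assume P: "P = Pt x1 y1" and Q: "Q = Pt x2 y2"
  have K: "x1 \<in> K" "y1 \<in> K" "x2 \<in> K" "y2 \<in> K" using assms P Q by auto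
  have iff: "(tau x1 = tau x2 \<and> tau y1 = - tau y2) \<longleftrightarrow> (x1 = x2 \<and> y1 = -y2)"
    using tau_inj[OF K(1,3)] tau_inj[OF K(2) K_neg(1)[OF K(4)]] K_neg(2)[OF K(4)] by auto
  show ?thesis
  proof (cases "x1 = x2 \<and> y1 = -y2")
    case True
    then show ?thesis using P Q iff by simp
  next
    case False
    have F: "\<not>(tau x1 = tau x2 \<and> tau y1 = - tau y2)" using iff False by simp
    define l where "l = slope a x1 y1 x2 y2"
    have l: "l \<in> K" "tau l = slope a (tau x1) (tau y1) (tau x2) (tau y2)"
      using slope_K[OF K assms(3)] l_def by simp_all
    have X: "l^2 - x1 - x2 \<in> K" "tau (l^2 - x1 - x2) = (tau l)^2 - tau x1 - tau x2"
      using K_diff[OF K_diff(1)[OF K_pow2(1)[OF l(1)] K(1)] K(3)] K_diff[OF K_pow2(1)[OF l(1)] K(1)]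
        K_pow2[OF l(1)] by simp_all
    have Y: "l * (x1 - (l^2 - x1 - x2)) - y1 \<in> K"
      "tau (l * (x1 - (l^2 - x1 - x2)) - y1) = tau l * (tau x1 - (tau (l^2 - x1 - x2))) - tau y1"
      using K_diff[OF K_mult(1)[OF l(1) K_diff(1)[OF K(1) X(1)]] K(2)]
        K_mult[OF l(1) K_diff(1)[OF K(1) X(1)]] K_diff[OF K(1) X(1)] by simp_all
    show ?thesis unfolding P Q pt_map.simps ec_add_gen[OF False] ec_add_gen[OF F] l_def[symmetric] l(2)[symmetric]
      using X Y by simp
  qed
qed (use assms in auto)

lemma tau_nmul:
  assumes "pt_in K P" "a \<in> \<rat>"
  shows "pt_in K (ec_nmul a n P) \<and> pt_map tau (ec_nmul a n P) = ec_nmul a n (pt_map tau P)"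
proof (induct n)
  case 0 then show ?case by simp
next
  case (Suc n)
  then show ?case using tau_add[OF assms(1) _ assms(2), of "ec_nmul a n P"] by simp
qed

lemma rat_pt: "pt_in \<rat> P \<Longrightarrow> pt_in K P \<and> pt_map tau P = P"
  by (cases P) (simp_all add: Rats_K)

lemma fix_pt: "pt_in K P \<Longrightarrow> pt_map tau P = P \<Longrightarrow> pt_in \<rat> P"
  by (cases P) (auto intro: tau_fix)

end

lemma pt_in_neg: "pt_in \<rat> (ec_neg P) \<Longrightarrow> pt_in \<rat> P"
  by (cases P) (auto simp: Rats_minus_iff)

lemma nmul1: "ec_nmul a 1 Q = Q" by simp

lemma nmul2: "ec_nmul a 2 Q = ec_add a Q Q" by (simp add: numeral_2_eq_2)

lemma nmul3: "ec_nmul a 3 Q = ec_add a Q (ec_add a Q Q)" by (simp add: numeral_3_eq_3)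

theorem lemma5p1:
  fixes a b :: complex and d m :: int and P :: pt and \<psi> :: "pt \<Rightarrow> pt"
  assumes "elliptic_Q a b"
    and "squarefree d" and "d \<noteq> 1"
    and "on_curve a b P" and "pt_in (quad_field d) P" and "\<not> pt_in \<rat> P"
    and "m \<noteq> 0" and "pt_in \<rat> (ec_mul a m P)"
    and "ec_aut a b \<psi>"
    and "\<psi> P = pt_map (quad_conj d) P"
  shows "finite_order a P"
proof -
  interpret qf d using assms(2,3) by unfold_locales
  have aQ: "a \<in> \<rat>" and disc: "4*a^3+27*b^2 \<noteq> 0" using assms(1) unfolding elliptic_Q_def by auto
  obtain u where u: "u \<noteq> 0" "u^4*a = a" "u^6*b = b" and psi: "\<psi> = wsub u 0 0 0"
    using aut_form[OF assms(9)] by blast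
  define n where "n = nat \<bar>m\<bar>"
  have n0: "n > 0" using assms(7) n_def by simp
  define Q where "Q = ec_nmul a n P"
  have Qrat: "pt_in \<rat> Q"
  proof (cases "m \<ge> 0")
    case True then show ?thesis using assms(8) unfolding ec_mul_def Q_def n_def by simp
  next
    case False then show ?thesis using assms(8) pt_in_neg unfolding ec_mul_def Q_def n_def by simp
  qed
  have oP: "on_curve a b P" by (rule assms(4))
  have tP: "pt_in K (ec_nmul a n P) \<and> pt_map tau (ec_nmul a n P) = ec_nmul a n (pt_map tau P)"
    by (rule tau_nmul[OF assms(5) aQ])
  have "pt_map tau Q = Q" using rat_pt[OF Qrat] by simp
  then have "ec_nmul a n (pt_map tau P) = Q" using tP Q_def by simp
  then have "ec_nmul a n (\<psi> P) = Q" using assms(10) by simp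
  then have psiQ: "wsub u 0 0 0 Q = Q" unfolding Q_def psi using wsub_nmul[OF u(1,2)] by simp
  have "\<exists>k. k > 0 \<and> ec_nmul a k Q = Infty"
  proof (cases Q)
    case Infty then show ?thesis by (intro exI[of _ 1]) simp
  next
    case (Pt xq yq)
    have e: "u^2*xq = xq" "u^3*yq = yq" using psiQ Pt by simp_all
    show ?thesis
    proof (cases "yq = 0")
      case True
      have "ec_nmul a 2 Q = Infty" unfolding nmul2 Pt using True by simp
      then show ?thesis by (intro exI[of _ 2]) simp
    next
      case False
      have u3: "u^3 = 1" using e(2) False by simp
      have u1: "u \<noteq> 1"
      proof
        assume "u = 1"
        then have "\<psi> P = P" using psi by (cases P) simp_all
        then have "pt_map tau P = P" using assms(10) by simp
        then show False using fix_pt[OF assms(5)] assms(6) by simp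
      qed
      have xq0: "xq = 0"
      proof (rule ccontr)
        assume "xq \<noteq> 0"
        then have "u^2 = 1" using e(1) by simp
        then have "u = 1" using u3 by algebra
        then show False using u1 by simp
      qed
      have "u^4 = u" using u3 by algebra
      then have "u * a = a" using u(2) by simp
      then have "(u - 1) * a = 0" by (simp add: algebra_simps)
      then have a0: "a = 0" using u1 by simp
      have QQ: "ec_add a Q Q = Pt 0 (-yq)"
        unfolding Pt xq0 a0 using False by (simp add: Let_def)
      have "ec_nmul a 3 Q = Infty" unfolding nmul3 QQ unfolding Pt xq0 by simp
      then show ?thesis by (intro exI[of _ 3]) simp
    qed
  qed
  then obtain k where k: "k > 0" "ec_nmul a k Q = Infty" by blast
  have "ec_nmul a (k * n) P = Infty" using nmul_mult[OF oP disc] k Q_def by simp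
  moreover have "k * n > 0" using k n0 by simp
  ultimately show ?thesis unfolding finite_order_def by blast
qed

end
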